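(* Let $G$ be a path or a cycle and let $I_s,I_t$ be independent sets of $G$. Then the minimum length of a reconfiguration sequence from $I_s$ to $I_t$ is exactly $\mathrm{cc}(I_s\triangle I_t)$.
   Context: All graphs are finite, simple and undirected. For $V'\subseteq V(G)$, $\mathrm{cc}(V')$ denotes the number of connected components of the induced subgraph $G[V']$. A reconfiguration sequence from $I_s$ to $I_t$ of length $\ell$ is a sequence $\langle I_s=I_0,\dots,I_\ell=I_t\rangle$ of independent sets of $G$ such that $G[I_{i-1}\triangle I_i]$ is connected for every $i\in\{1,\dots,\ell\}$. *)

theory Defs
  imports Main
begin

definition is_path_graph :: "'a set \<Rightarrow> 'a set set \<Rightarrow> bool" where
  "is_path_graph V E \<longleftrightarrow> (\<exists>vs. vs \<noteq> [] \<and> distinct vs \<and> V = set vs \<and>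
      E = {{vs ! i, vs ! Suc i} | i. Suc i < length vs})"

definition is_cycle_graph :: "'a set \<Rightarrow> 'a set set \<Rightarrow> bool" where
  "is_cycle_graph V E \<longleftrightarrow> (\<exists>vs. length vs \<ge> 3 \<and> distinct vs \<and> V = set vs \<and>
      E = {{vs ! i, vs ! ((Suc i) mod length vs)} | i. i < length vs})"

definition independent :: "'a set \<Rightarrow> 'a set set \<Rightarrow> 'a set \<Rightarrow> bool" where
  "independent V E I \<longleftrightarrow> I \<subseteq> V \<and> (\<forall>u\<in>I. \<forall>v\<in>I. {u, v} \<notin> E)"

definition adj_in :: "'a set set \<Rightarrow> 'a set \<Rightarrow> 'a \<Rightarrow> 'a \<Rightarrow> bool" where
  "adj_in E S u v \<longleftrightarrow> u \<in> S \<and> v \<in> S \<and> u \<noteq> v \<and> {u, v} \<in> E"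

definition induced_connected :: "'a set set \<Rightarrow> 'a set \<Rightarrow> bool" where
  "induced_connected E S \<longleftrightarrow> S \<noteq> {} \<and> (\<forall>u\<in>S. \<forall>v\<in>S. (adj_in E S)\<^sup>*\<^sup>* u v)"

definition cc :: "'a set set \<Rightarrow> 'a set \<Rightarrow> nat" where
  "cc E S = card {{u. (adj_in E S)\<^sup>*\<^sup>* v u} | v. v \<in> S}"

definition symdiff :: "'a set \<Rightarrow> 'a set \<Rightarrow> 'a set" where
  "symdiff A B = (A - B) \<union> (B - A)"

text \<open>Its length is l = length of the list minus 1.\<close>
definition reconf_seq :: "'a set \<Rightarrow> 'a set set \<Rightarrow> 'a set \<Rightarrow> 'a set \<Rightarrow> 'a set list \<Rightarrow> bool" where
  "reconf_seq V E Is It seq \<longleftrightarrow> seq \<noteq> [] \<and> hd seq = Is \<and> last seq = It \<and>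
     (\<forall>I\<in>set seq. independent V E I) \<and>
     (\<forall>i. Suc i < length seq \<longrightarrow> induced_connected E (symdiff (seq ! i) (seq ! Suc i)))"

end

theory Submission
  imports Defs
begin

definition chg :: "(nat \<Rightarrow> bool) \<Rightarrow> nat \<Rightarrow> nat" where
  "chg f N = card {i. i < N \<and> f i \<noteq> f (Suc i)}"
definition ups :: "(nat \<Rightarrow> bool) \<Rightarrow> nat \<Rightarrow> nat" where
  "ups f N = card {i. i < N \<and> \<not> f i \<and> f (Suc i)}"
definition dns :: "(nat \<Rightarrow> bool) \<Rightarrow> nat \<Rightarrow> nat" where
  "dns f N = card {i. i < N \<and> f i \<and> \<not> f (Suc i)}"

lemma card_lessSuc_split:
  "card {i. i < Suc m \<and> P i} = card {i. i < m \<and> P i} + (if P m then 1 else 0)"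
proof -
  have "{i. i < Suc m \<and> P i} = (if P m then insert m {i. i < m \<and> P i} else {i. i < m \<and> P i})"
    by (auto simp: less_Suc_eq)
  then show ?thesis by simp
qed

lemma ups_dns_int:
  "int (ups f m) = int (dns f m) + of_bool (f m) - of_bool (f 0)"
proof (induction m)
  case 0 then show ?case by (simp add: ups_def dns_def)
next
  case (Suc m)
  have u: "ups f (Suc m) = ups f m + (if \<not> f m \<and> f (Suc m) then 1 else 0)"
    unfolding ups_def by (rule card_lessSuc_split)
  have d: "dns f (Suc m) = dns f m + (if f m \<and> \<not> f (Suc m) then 1 else 0)"
    unfolding dns_def by (rule card_lessSuc_split)
  show ?case using Suc u d by auto
qed

lemma chg_ups_dns: "chg f N = ups f N + dns f N"
proof -
  have "{i. i < N \<and> f i \<noteq> f (Suc i)} = {i. i < N \<and> \<not> f i \<and> f (Suc i)} \<union> {i. i < N \<and> f i \<and> \<not> f (Suc i)}"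
    by auto
  moreover have "card ({i. i < N \<and> \<not> f i \<and> f (Suc i)} \<union> {i. i < N \<and> f i \<and> \<not> f (Suc i)})
     = card {i. i < N \<and> \<not> f i \<and> f (Suc i)} + card {i. i < N \<and> f i \<and> \<not> f (Suc i)}"
    by (rule card_Un_disjoint) auto
  ultimately show ?thesis by (simp add: chg_def ups_def dns_def)
qed

lemma chg_balance: "f 0 = f N \<Longrightarrow> chg f N = 2 * ups f N"
  using ups_dns_int[of f N] chg_ups_dns[of f N] by simp

lemma chg_xor: "chg (\<lambda>i. f i \<noteq> g i) N \<le> chg f N + chg g N"
proof -
  have "{i. i < N \<and> (f i \<noteq> g i) \<noteq> (f (Suc i) \<noteq> g (Suc i))} \<subseteq>
        {i. i < N \<and> f i \<noteq> f (Suc i)} \<union> {i. i < N \<and> g i \<noteq> g (Suc i)}" by auto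
  then have "chg (\<lambda>i. f i \<noteq> g i) N \<le> card ({i. i < N \<and> f i \<noteq> f (Suc i)} \<union> {i. i < N \<and> g i \<noteq> g (Suc i)})"
    unfolding chg_def by (intro card_mono) auto
  also have "\<dots> \<le> chg f N + chg g N" unfolding chg_def by (rule card_Un_le)
  finally show ?thesis .
qed

lemma symdiff_assoc: "symdiff Is J = symdiff (symdiff Is I) (symdiff I J)"
  unfolding symdiff_def by auto

lemma lower_generic:
  assumes rs: "reconf_seq V E Is It seq"
    and xor: "\<And>A B i. F (symdiff A B) i = (F A i \<noteq> F B i)"
    and emp: "\<And>i. \<not> F {} i"
    and conn: "\<And>D. D \<subseteq> V \<Longrightarrow> induced_connected E D \<Longrightarrow> chg (F D) N \<le> 2"
  shows "j < length seq \<Longrightarrow> chg (F (symdiff Is (seq!j))) N \<le> 2*j"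
proof (induction j)
  case 0
  from rs have "seq ! 0 = Is" unfolding reconf_seq_def by (cases seq) auto
  then have "symdiff Is (seq!0) = {}" by (simp add: symdiff_def)
  then show ?case by (simp add: chg_def emp)
next
  case (Suc j)
  let ?D = "symdiff (seq!j) (seq!Suc j)"
  have ind: "independent V E (seq!j)" "independent V E (seq!Suc j)"
    using rs Suc.prems unfolding reconf_seq_def by auto
  have DV: "?D \<subseteq> V" using ind unfolding independent_def symdiff_def by auto
  have "induced_connected E ?D" using rs Suc.prems unfolding reconf_seq_def by auto
  then have c2: "chg (F ?D) N \<le> 2" using conn DV by blast
  have eq: "F (symdiff Is (seq!Suc j)) = (\<lambda>i. F (symdiff Is (seq!j)) i \<noteq> F ?D i)"
    using symdiff_assoc[of Is "seq!Suc j" "seq!j"] xor by (auto intro!: ext)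
  have "chg (F (symdiff Is (seq!Suc j))) N \<le> chg (F (symdiff Is (seq!j))) N + chg (F ?D) N"
    unfolding eq by (rule chg_xor)
  then show ?case using Suc c2 by simp
qed

definition compo :: "'a set set \<Rightarrow> 'a set \<Rightarrow> 'a \<Rightarrow> 'a set" where
  "compo E X v = {u. (adj_in E X)\<^sup>*\<^sup>* v u}"

lemma cc_comp: "cc E X = card (compo E X ` X)"
  unfolding cc_def compo_def by (simp add: Setcompr_eq_image)

lemma adj_sym: "adj_in E X u v = adj_in E X v u"
  unfolding adj_in_def by (auto simp: insert_commute)

lemma rtc_sym: "(adj_in E X)\<^sup>*\<^sup>* u v \<Longrightarrow> (adj_in E X)\<^sup>*\<^sup>* v u"
proof (induction rule: rtranclp_induct)
  case base then show ?case by simp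
next
  case (step y z)
  then have "adj_in E X z y" using adj_sym by metis
  then show ?case using step by (meson converse_rtranclp_into_rtranclp)
qed

lemma rtc_in: "(adj_in E X)\<^sup>*\<^sup>* u v \<Longrightarrow> u \<in> X \<Longrightarrow> v \<in> X"
  by (induction rule: rtranclp_induct) (auto simp: adj_in_def)

lemma cpo_sub: "v \<in> X \<Longrightarrow> compo E X v \<subseteq> X"
  unfolding compo_def using rtc_in by fast

lemma cpo_self: "v \<in> compo E X v"
  unfolding compo_def by simp

lemma cpo_eq: "u \<in> compo E X v \<Longrightarrow> compo E X u = compo E X v"
proof -
  assume "u \<in> compo E X v"
  then have vu: "(adj_in E X)\<^sup>*\<^sup>* v u" unfolding compo_def by auto
  then have uv: "(adj_in E X)\<^sup>*\<^sup>* u v" by (rule rtc_sym)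
  show ?thesis unfolding compo_def
    using rtranclp_trans[OF vu] rtranclp_trans[OF uv] by blast
qed

lemma cpo_closed: "u \<in> compo E X v \<Longrightarrow> adj_in E X u w \<Longrightarrow> w \<in> compo E X v"
  unfolding compo_def by (auto intro: rtranclp.rtrancl_into_rtrancl)

lemma cpo_disj: "compo E X u \<noteq> compo E X v \<Longrightarrow> compo E X u \<inter> compo E X v = {}"
  by (metis cpo_eq disjoint_iff)

lemma rtc_restrict:
  assumes "(adj_in E X)\<^sup>*\<^sup>* a b" "a \<in> C"
    and "\<And>y z. y \<in> C \<Longrightarrow> adj_in E X y z \<Longrightarrow> z \<in> C \<and> adj_in E C y z"
  shows "(adj_in E C)\<^sup>*\<^sup>* a b \<and> b \<in> C"
  using assms(1,2)
proof (induction rule: rtranclp_induct)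
  case base then show ?case by simp
next
  case (step y z)
  then have "y \<in> C" "(adj_in E C)\<^sup>*\<^sup>* a y" by auto
  with assms(3)[OF this(1) step(2)] show ?case
    by (auto intro: rtranclp.rtrancl_into_rtrancl)
qed

lemma cpo_connected:
  assumes "v \<in> X" shows "induced_connected E (compo E X v)"
  unfolding induced_connected_def
proof (intro conjI ballI)
  show "compo E X v \<noteq> {}" using cpo_self by fast
  fix a b assume a: "a \<in> compo E X v" and b: "b \<in> compo E X v"
  have cs: "compo E X v \<subseteq> X" using cpo_sub assms by fast
  have va: "(adj_in E X)\<^sup>*\<^sup>* v a" and vb: "(adj_in E X)\<^sup>*\<^sup>* v b"
    using a b unfolding compo_def by auto
  have "(adj_in E X)\<^sup>*\<^sup>* a b"
    using rtranclp_trans[OF rtc_sym[OF va] vb] .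
  moreover have "\<And>y z. y \<in> compo E X v \<Longrightarrow> adj_in E X y z \<Longrightarrow>
      z \<in> compo E X v \<and> adj_in E (compo E X v) y z"
  proof -
    fix y z assume y: "y \<in> compo E X v" and yz: "adj_in E X y z"
    have z: "z \<in> compo E X v" by (rule cpo_closed[OF y yz])
    have "adj_in E (compo E X v) y z" using y z yz unfolding adj_in_def by simp
    then show "z \<in> compo E X v \<and> adj_in E (compo E X v) y z" using z by simp
  qed
  ultimately show "(adj_in E (compo E X v))\<^sup>*\<^sup>* a b" using rtc_restrict[of E X a b] a by blast
qed

lemma comps_union: "\<Union> (compo E X ` X) = X"
proof
  show "\<Union> (compo E X ` X) \<subseteq> X"
  proof
    fix x assume "x \<in> \<Union> (compo E X ` X)"
    then obtain v where v: "v \<in> X" "x \<in> compo E X v" by auto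
    then show "x \<in> X" using cpo_sub[OF v(1)] by (rule_tac subsetD)
  qed
  show "X \<subseteq> \<Union> (compo E X ` X)"
  proof
    fix x assume "x \<in> X"
    then show "x \<in> \<Union> (compo E X ` X)" using cpo_self[of x E X] by (rule UN_I)
  qed
qed

lemma indep_flip:
  assumes "independent V E Is" "independent V E It"
    and U: "U \<subseteq> symdiff Is It"
    and cl: "\<And>u w. u \<in> U \<Longrightarrow> adj_in E (symdiff Is It) u w \<Longrightarrow> w \<in> U"
  shows "independent V E (symdiff Is U)"
  unfolding independent_def
proof (intro conjI ballI)
  show "symdiff Is U \<subseteq> V" using assms(1,2) U unfolding independent_def symdiff_def by auto
  fix x y assume x: "x \<in> symdiff Is U" and y: "y \<in> symdiff Is U"
  show "{x, y} \<notin> E"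
  proof
    assume e: "{x, y} \<in> E"
    have e': "{y, x} \<in> E" using e by (simp add: insert_commute)
    have i1: "\<And>a b. a \<in> Is \<Longrightarrow> b \<in> Is \<Longrightarrow> {a, b} \<notin> E" using assms(1) unfolding independent_def by auto
    have i2: "\<And>a b. a \<in> It \<Longrightarrow> b \<in> It \<Longrightarrow> {a, b} \<notin> E" using assms(2) unfolding independent_def by auto
    have key: "\<And>a b. a \<in> Is - U \<Longrightarrow> b \<in> U - Is \<Longrightarrow> {a, b} \<in> E \<Longrightarrow> False"
    proof -
      fix a b assume a: "a \<in> Is - U" and b: "b \<in> U - Is" and ab: "{a, b} \<in> E"
      have bt: "b \<in> It" using b U unfolding symdiff_def by auto
      show False
      proof (cases "a \<in> It")
        case True then show False using i2 bt ab by blast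
      next
        case False
        then have "adj_in E (symdiff Is It) b a"
          using a b U ab unfolding adj_in_def symdiff_def by (auto simp: insert_commute)
        then have "a \<in> U" using cl b by blast
        then show False using a by blast
      qed
    qed
    from x y have "(x \<in> Is - U \<or> x \<in> U - Is) \<and> (y \<in> Is - U \<or> y \<in> U - Is)"
      unfolding symdiff_def by auto
    moreover have "U - Is \<subseteq> It" using U unfolding symdiff_def by auto
    ultimately show False using key e e' i1 i2 by blast
  qed
qed

lemma symdiff_cancel: "symdiff (symdiff Is U) (symdiff Is W) = symdiff U W"
  unfolding symdiff_def by auto

lemma upper:
  assumes iS: "independent V E Is" and iT: "independent V E It" and fin: "finite V"
  shows "\<exists>seq. reconf_seq V E Is It seq \<and> length seq - 1 = cc E (symdiff Is It)"
proof -
  define S where "S = symdiff Is It"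
  define C where "C = compo E S ` S"
  have SV: "S \<subseteq> V" using iS iT unfolding S_def independent_def symdiff_def by auto
  then have finS: "finite S" using fin finite_subset by blast
  then have finC: "finite C" unfolding C_def by simp
  obtain cs where cs: "distinct cs" "set cs = C" using finite_distinct_list[OF finC] by blast
  define k where "k = length cs"
  have kcc: "k = cc E S" unfolding k_def cc_comp C_def[symmetric]
    using distinct_card[OF cs(1)] cs(2) by simp
  define U where "U j = \<Union> (set (take j cs))" for j
  define f where "f j = symdiff Is (U j)" for j
  define seq where "seq = map f [0..<Suc k]"
  have csC: "\<And>i. i < k \<Longrightarrow> \<exists>v\<in>S. cs ! i = compo E S v"
    using cs(2) unfolding k_def C_def by (metis imageE nth_mem)
  have US: "U j \<subseteq> S" for j
  proof
    fix x assume "x \<in> U j"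
    then obtain c where c: "c \<in> set (take j cs)" "x \<in> c" unfolding U_def by auto
    then have "c \<in> C" using cs(2) by (meson in_set_takeD)
    then obtain v where v: "v \<in> S" "c = compo E S v" unfolding C_def by auto
    show "x \<in> S" using cpo_sub[OF v(1), of E] c(2) v(2) by auto
  qed
  have Ucl: "\<And>u w. u \<in> U j \<Longrightarrow> adj_in E S u w \<Longrightarrow> w \<in> U j" for j
  proof -
    fix u w assume u: "u \<in> U j" and uw: "adj_in E S u w"
    then obtain c where c: "c \<in> set (take j cs)" "u \<in> c" unfolding U_def by auto
    then have "c \<in> C" using cs(2) by (meson in_set_takeD)
    then obtain v where v: "v \<in> S" "c = compo E S v" unfolding C_def by auto
    have "w \<in> c" using cpo_closed[of u E S v w] c(2) v(2) uw by simp
    then show "w \<in> U j" using c(1) unfolding U_def by auto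
  qed
  have indf: "independent V E (f j)" for j
    unfolding f_def using indep_flip[OF iS iT, of "U j"] US Ucl unfolding S_def by blast
  have U0: "U 0 = {}" unfolding U_def by simp
  have Uk: "U k = S" unfolding U_def k_def using cs(2) comps_union[of E S] unfolding C_def by simp
  have up: "[0..<Suc k] = 0 # [1..<Suc k]" by (simp add: upt_rec)
  have hd: "hd seq = Is" unfolding seq_def f_def up
    by (simp add: U0 symdiff_def)
  have lst: "last seq = It" unfolding seq_def f_def using Uk
    unfolding S_def symdiff_def by auto
  have step: "induced_connected E (symdiff (seq ! i) (seq ! Suc i))" if i: "Suc i < length seq" for i
  proof -
    have ik: "i < k" using i unfolding seq_def by simp
    have s1: "seq ! i = f i" "seq ! Suc i = f (Suc i)" using ik unfolding seq_def
      by (simp_all add: nth_append del: upt_Suc) 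
    have USuc: "U (Suc i) = U i \<union> cs ! i" unfolding U_def using ik k_def
      by (simp add: take_Suc_conv_app_nth Un_commute)
    have disj: "U i \<inter> cs ! i = {}"
    proof -
      have "c \<inter> cs ! i = {}" if c: "c \<in> set (take i cs)" for c
      proof -
        obtain j where j: "j < i" "c = cs ! j" using c ik k_def
          by (metis in_set_conv_nth length_take min.absorb4 nth_take)
        have ne: "cs ! j \<noteq> cs ! i" using cs(1) j(1) ik k_def nth_eq_iff_index_eq by fastforce
        obtain v1 where v1: "v1 \<in> S" "cs ! j = compo E S v1" using csC j(1) ik by (meson less_trans)
        obtain v2 where v2: "v2 \<in> S" "cs ! i = compo E S v2" using csC ik by blast
        show ?thesis using cpo_disj[of E S v1 v2] ne v1 v2 j by simp
      qed
      then show ?thesis unfolding U_def by blast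
    qed
    have "symdiff (seq ! i) (seq ! Suc i) = cs ! i"
      unfolding s1 f_def symdiff_cancel USuc using disj unfolding symdiff_def by blast
    moreover obtain v where "v \<in> S" "cs ! i = compo E S v" using csC ik by blast
    ultimately show ?thesis using cpo_connected by metis
  qed
  have "reconf_seq V E Is It seq"
    unfolding reconf_seq_def using hd lst step indf unfolding seq_def by auto
  moreover have "length seq - 1 = cc E (symdiff Is It)" unfolding seq_def kcc S_def by simp
  ultimately show ?thesis by blast
qed

lemma crossing:
  assumes "R\<^sup>*\<^sup>* x y" "pos x < s"
    and st: "\<And>a b. R a b \<Longrightarrow> pos b = Suc (pos a) \<or> pos a = Suc (pos b)"
    and pr: "\<And>a b. R a b \<Longrightarrow> P a"
  shows "s \<le> pos y \<Longrightarrow> \<exists>a. P a \<and> Suc (pos a) = s"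
  using assms(1)
proof (induction rule: rtranclp_induct)
  case base then show ?case using assms(2) by simp
next
  case (step y z)
  show ?case
  proof (cases "s \<le> pos y")
    case True then show ?thesis using step by blast
  next
    case False
    then have "Suc (pos y) = s" using st[OF step(2)] step(4) by auto
    then show ?thesis using pr[OF step(2)] by blast
  qed
qed

locale lin =
  fixes at :: "nat \<Rightarrow> 'a" and m :: nat and E :: "'a set set" and W :: "'a set"
  assumes at_inj: "\<And>a b. a < m \<Longrightarrow> b < m \<Longrightarrow> at a = at b \<Longrightarrow> a = b"
    and W_at: "\<And>w. w \<in> W \<Longrightarrow> \<exists>p<m. at p = w"
    and edge_in: "\<And>p. Suc p < m \<Longrightarrow> {at p, at (Suc p)} \<in> E"
    and edge_form: "\<And>x y. {x, y} \<in> E \<Longrightarrow> x \<in> W \<Longrightarrow> y \<in> W \<Longrightarrow> \<exists>p. Suc p < m \<and> {x, y} = {at p, at (Suc p)}"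
begin

definition pos :: "'a \<Rightarrow> nat" where "pos w = (SOME p. p < m \<and> at p = w)"

lemma pos: "w \<in> W \<Longrightarrow> pos w < m \<and> at (pos w) = w"
  unfolding pos_def using W_at by (metis (mono_tags, lifting) someI_ex)

lemma pos_at: "p < m \<Longrightarrow> at p \<in> W \<Longrightarrow> pos (at p) = p"
  using pos at_inj by blast

definition starts :: "'a set \<Rightarrow> nat set" where
  "starts X = {p. p < m \<and> at p \<in> X \<and> (p = 0 \<or> at (p - 1) \<notin> X)}"

lemma finite_starts: "finite (starts X)"
  unfolding starts_def by simp

lemma step_pos:
  assumes XW: "X \<subseteq> W" and a: "adj_in E X y z"
  shows "pos z = Suc (pos y) \<or> pos y = Suc (pos z)"
proof -
  have yz: "y \<in> W" "z \<in> W" "{y, z} \<in> E" using a XW unfolding adj_in_def by auto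
  obtain p where p: "Suc p < m" "{y, z} = {at p, at (Suc p)}" using edge_form[OF yz(3,1,2)] by blast
  have "(y = at p \<and> z = at (Suc p)) \<or> (y = at (Suc p) \<and> z = at p)"
    using p(2) by (auto simp: doubleton_eq_iff)
  then show ?thesis
  proof
    assume h: "y = at p \<and> z = at (Suc p)"
    then have "pos y = p" "pos z = Suc p" using pos_at p(1) yz by auto
    then show ?thesis by simp
  next
    assume h: "y = at (Suc p) \<and> z = at p"
    then have "pos z = p" "pos y = Suc p" using pos_at p(1) yz by auto
    then show ?thesis by simp
  qed
qed

lemma cc_le_starts:
  assumes XW: "X \<subseteq> W"
  shows "cc E X \<le> card (starts X)"
proof -
  have finW: "finite W"
  proof -
    have "W \<subseteq> at ` {..<m}" using W_at by blast
    then show ?thesis by (rule finite_subset) simp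
  qed
  have sub: "compo E X ` X \<subseteq> (\<lambda>p. compo E X (at p)) ` starts X"
  proof
    fix K assume "K \<in> compo E X ` X"
    then obtain v where v: "v \<in> X" "K = compo E X v" by auto
    have KX: "K \<subseteq> X" using cpo_sub[OF v(1)] v(2) by simp
    have finK: "finite K" by (rule finite_subset[OF subset_trans[OF KX XW] finW])
    have neK: "K \<noteq> {}" using cpo_self v(2) by fast
    define mm where "mm = Min (pos ` K)"
    have "mm \<in> pos ` K" unfolding mm_def using finK neK by simp
    then obtain u where u: "u \<in> K" "pos u = mm" by auto
    have uW: "u \<in> W" using u KX XW by auto
    have mmlt: "mm < m" "at mm = u" using pos[OF uW] u by auto
    have minK: "\<And>w. w \<in> K \<Longrightarrow> mm \<le> pos w" unfolding mm_def using finK by simp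
    have "mm \<in> starts X"
      unfolding starts_def
    proof (intro CollectI conjI)
      show "mm < m" by fact
      show "at mm \<in> X" using mmlt u KX by auto
      show "mm = 0 \<or> at (mm - 1) \<notin> X"
      proof (rule ccontr)
        assume "\<not> (mm = 0 \<or> at (mm - 1) \<notin> X)"
        then have nz: "mm \<noteq> 0" and inX: "at (mm - 1) \<in> X" by auto
        have sm: "Suc (mm - 1) = mm" using nz by simp
        have m1: "mm - 1 < m" using mmlt by simp
        have ne: "at (mm - 1) \<noteq> at mm"
        proof
          assume "at (mm - 1) = at mm"
          then have "mm - 1 = mm" using at_inj[OF m1 mmlt(1)] by simp
          then show False using nz by simp
        qed
        have "{at (mm - 1), at mm} \<in> E" using edge_in[of "mm - 1"] sm mmlt by simp
        then have "adj_in E X (at mm) (at (mm - 1))"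
          unfolding adj_in_def using ne inX mmlt u KX by (auto simp: insert_commute)
        then have "at (mm - 1) \<in> K" using cpo_closed[of u E X v] u v(2) mmlt by simp
        then have "mm \<le> pos (at (mm - 1))" using minK by blast
        moreover have "pos (at (mm - 1)) = mm - 1" using pos_at[of "mm - 1"] inX XW mmlt by auto
        ultimately show False using nz by simp
      qed
    qed
    moreover have "K = compo E X (at mm)" using cpo_eq[of u E X v] u v(2) mmlt by simp
    ultimately show "K \<in> (\<lambda>p. compo E X (at p)) ` starts X" by blast
  qed
  have "cc E X \<le> card ((\<lambda>p. compo E X (at p)) ` starts X)"
    unfolding cc_comp by (rule card_mono[OF finite_imageI[OF finite_starts] sub])
  also have "\<dots> \<le> card (starts X)" by (rule card_image_le[OF finite_starts])
  finally show ?thesis .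
qed

lemma starts_le1:
  assumes XW: "X \<subseteq> W" and con: "induced_connected E X"
  shows "card (starts X) \<le> 1"
proof -
  have "p1 = p2" if p1: "p1 \<in> starts X" and p2: "p2 \<in> starts X" and lt: "p1 < p2" for p1 p2
  proof -
    have a1: "p1 < m" "at p1 \<in> X" using p1 unfolding starts_def by auto
    have a2: "p2 < m" "at p2 \<in> X" "at (p2 - 1) \<notin> X" using p2 lt unfolding starts_def by auto
    have w: "(adj_in E X)\<^sup>*\<^sup>* (at p1) (at p2)" using con a1 a2 unfolding induced_connected_def by blast
    have q1: "pos (at p1) = p1" using pos_at a1 XW by auto
    have q2: "pos (at p2) = p2" using pos_at a2 XW by auto
    obtain a where a: "a \<in> X" "Suc (pos a) = p2"
      using crossing[of "adj_in E X" "at p1" "at p2" pos p2 "\<lambda>a. a \<in> X", OF w]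
        q1 q2 lt step_pos[OF XW] unfolding adj_in_def by auto
    have "at (pos a) = a" using pos a XW by auto
    then have "at (p2 - 1) = a" using a(2) by auto
    then show ?thesis using a a2 by simp
  qed
  then have "\<forall>a\<in>starts X. \<forall>b\<in>starts X. a = b" by (metis linorder_neqE_nat)
  then show ?thesis using card_le_Suc0_iff_eq[OF finite_starts] by simp
qed

end

lemma path_lin:
  assumes d: "distinct vs" and E: "E = {{vs ! i, vs ! Suc i} | i. Suc i < length vs}"
  shows "lin ((!) vs) (length vs) E (set vs)"
proof
  show "\<And>a b. a < length vs \<Longrightarrow> b < length vs \<Longrightarrow> vs ! a = vs ! b \<Longrightarrow> a = b"
    using d nth_eq_iff_index_eq by blast
  show "\<And>w. w \<in> set vs \<Longrightarrow> \<exists>p<length vs. vs ! p = w" by (simp add: in_set_conv_nth)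
  show "\<And>p. Suc p < length vs \<Longrightarrow> {vs ! p, vs ! Suc p} \<in> E" using E by blast
  show "\<And>x y. {x, y} \<in> E \<Longrightarrow> x \<in> set vs \<Longrightarrow> y \<in> set vs \<Longrightarrow>
      \<exists>p. Suc p < length vs \<and> {x, y} = {vs ! p, vs ! Suc p}" using E by blast
qed

definition fP :: "'a list \<Rightarrow> 'a set \<Rightarrow> nat \<Rightarrow> bool" where
  "fP vs X i = (0 < i \<and> i \<le> length vs \<and> vs ! (i - 1) \<in> X)"

lemma ups_fP:
  assumes L: "lin ((!) vs) (length vs) E (set vs)"
  shows "ups (fP vs X) (Suc (length vs)) = card (lin.starts ((!) vs) (length vs) X)"
proof -
  have "{i. i < Suc (length vs) \<and> \<not> fP vs X i \<and> fP vs X (Suc i)} =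
        {p. p < length vs \<and> vs ! p \<in> X \<and> (p = 0 \<or> vs ! (p - 1) \<notin> X)}"
    unfolding fP_def by (auto simp: Suc_le_eq)
  then show ?thesis unfolding ups_def by (simp add: lin.starts_def[OF L])
qed

lemma reconf_last: "reconf_seq V E Is It seq \<Longrightarrow> seq ! (length seq - 1) = It"
  unfolding reconf_seq_def by (metis last_conv_nth)

lemma path_lower:
  assumes d: "distinct vs" and E: "E = {{vs ! i, vs ! Suc i} | i. Suc i < length vs}"
    and V: "V = set vs" and rs: "reconf_seq V E Is It seq"
  shows "cc E (symdiff Is It) \<le> length seq - 1"
proof -
  interpret lin "(!) vs" "length vs" E "set vs" by (rule path_lin[OF d E])
  let ?N = "Suc (length vs)"
  have conn: "chg (fP vs D) ?N \<le> 2" if "D \<subseteq> V" "induced_connected E D" for D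
  proof -
    have "chg (fP vs D) ?N = 2 * ups (fP vs D) ?N"
      by (rule chg_balance) (simp add: fP_def)
    also have "\<dots> = 2 * card (starts D)" by (simp add: ups_fP[OF path_lin[OF d E]])
    also have "\<dots> \<le> 2" using starts_le1[of D] that V by simp
    finally show ?thesis .
  qed
  have ne: "seq \<noteq> []" using rs unfolding reconf_seq_def by simp
  have "chg (fP vs (symdiff Is (seq ! (length seq - 1)))) ?N \<le> 2 * (length seq - 1)"
    by (rule lower_generic[OF rs, of "fP vs"])
       (auto simp: fP_def symdiff_def conn ne)
  then have c: "chg (fP vs (symdiff Is It)) ?N \<le> 2 * (length seq - 1)"
    using reconf_last[OF rs] by simp
  have "cc E (symdiff Is It) \<le> card (starts (symdiff Is It))"
  proof (rule cc_le_starts)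
    show "symdiff Is It \<subseteq> set vs" using rs V unfolding reconf_seq_def independent_def symdiff_def
      by (metis (no_types, lifting) Un_least Diff_subset ne hd_in_set last_in_set subset_trans)
  qed
  also have "\<dots> = ups (fP vs (symdiff Is It)) ?N" by (simp add: ups_fP[OF path_lin[OF d E]])
  also have "\<dots> \<le> length seq - 1"
    using c chg_balance[of "fP vs (symdiff Is It)" ?N] by (simp add: fP_def)
  finally show ?thesis .
qed

lemma modq: "a < n \<Longrightarrow> q < n \<Longrightarrow> (a + q) mod (n::nat) = (if a + q < n then a + q else a + q - n)"
proof (cases "a + q < n")
  case True then show ?thesis by simp
next
  case False
  assume "a < n" "q < n"
  then have "a + q - n < n" by simp
  moreover have "(a + q) mod n = (a + q - n) mod n" using False le_mod_geq by simp
  ultimately show ?thesis using False by simp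
qed

lemma rot_inv: "i < n \<Longrightarrow> q < n \<Longrightarrow> ((i + n - q) mod n + q) mod (n::nat) = i"
proof -
  assume a: "i < n" "q < n"
  have "((i + n - q) mod n + q) mod n = (i + n - q + q) mod n" by (simp add: mod_add_left_eq)
  also have "i + n - q + q = i + n" using a by simp
  also have "(i + n) mod n = i" using a by simp
  finally show ?thesis .
qed

lemma cyc_lin:
  assumes d: "distinct vs" and n: "length vs \<ge> 3"
    and E: "E = {{vs ! i, vs ! ((Suc i) mod length vs)} | i. i < length vs}"
    and q: "q < length vs"
  shows "lin (\<lambda>p. vs ! ((p + q) mod length vs)) (length vs) E (set vs - {vs ! q})"
proof
  let ?n = "length vs"
  have np: "?n > 0" using n by (cases vs) auto
  show "a = b" if "a < ?n" "b < ?n" "vs ! ((a + q) mod ?n) = vs ! ((b + q) mod ?n)" for a b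
  proof -
    have "(a + q) mod ?n = (b + q) mod ?n" using that d np nth_eq_iff_index_eq by fastforce
    then show ?thesis using modq[of a ?n q] modq[of b ?n q] that q by (auto split: if_splits)
  qed
  show "\<exists>p<?n. vs ! ((p + q) mod ?n) = w" if "w \<in> set vs - {vs ! q}" for w
  proof -
    have "w \<in> set vs" using that by simp
    then obtain j where j: "j < ?n" "vs ! j = w" unfolding in_set_conv_nth by blast
    show ?thesis using rot_inv[OF j(1) q] j np by (intro exI[of _ "(j + ?n - q) mod ?n"]) auto
  qed
  show "{vs ! ((p + q) mod ?n), vs ! ((Suc p + q) mod ?n)} \<in> E" if "Suc p < ?n" for p
  proof -
    have "Suc ((p + q) mod ?n) mod ?n = (Suc p + q) mod ?n" by (simp add: mod_Suc_eq)
    then show ?thesis unfolding E using np by (intro CollectI exI[of _ "(p + q) mod ?n"]) auto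
  qed
  show "\<exists>p. Suc p < ?n \<and> {x, y} = {vs ! ((p + q) mod ?n), vs ! ((Suc p + q) mod ?n)}"
    if xy: "{x, y} \<in> E" "x \<in> set vs - {vs ! q}" "y \<in> set vs - {vs ! q}" for x y
  proof -
    obtain i where i: "i < ?n" "{x, y} = {vs ! i, vs ! (Suc i mod ?n)}" using xy(1) unfolding E by blast
    define p where "p = (i + ?n - q) mod ?n"
    have p1: "(p + q) mod ?n = i" unfolding p_def using rot_inv[OF i(1) q] .
    have p2: "(Suc p + q) mod ?n = Suc i mod ?n"
    proof -
      have "(Suc p + q) mod ?n = Suc ((p + q) mod ?n) mod ?n" by (simp add: mod_Suc_eq)
      then show ?thesis using p1 by simp
    qed
    have pn: "p < ?n" unfolding p_def using np by simp
    have "Suc p \<noteq> ?n"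
    proof
      assume "Suc p = ?n"
      then have "(Suc p + q) mod ?n = q" using q by simp
      then have "vs ! (Suc i mod ?n) = vs ! q" using p2 by simp
      then show False using i(2) xy(2,3) by (auto simp: doubleton_eq_iff)
    qed
    then have "Suc p < ?n" using pn by simp
    then show ?thesis using i(2) p1 p2 by auto
  qed
qed

definition fC :: "'a list \<Rightarrow> 'a set \<Rightarrow> nat \<Rightarrow> bool" where
  "fC vs X i = (vs ! (i mod length vs) \<in> X)"

locale cycg =
  fixes vs :: "'a list" and E :: "'a set set"
  assumes d: "distinct vs" and n3: "length vs \<ge> 3"
    and E: "E = {{vs ! i, vs ! ((Suc i) mod length vs)} | i. i < length vs}"
begin

abbreviation "n \<equiv> length vs"

lemma np: "n > 0" using n3 by (cases vs) auto

lemma L: "q < n \<Longrightarrow> lin (\<lambda>p. vs ! ((p + q) mod n)) n E (set vs - {vs ! q})"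
  by (rule cyc_lin[OF d n3 E])

lemma ups_le_starts:
  assumes q: "q < n" and Dq: "vs ! q \<notin> D"
  shows "ups (fC vs D) n \<le> card (lin.starts (\<lambda>p. vs ! ((p + q) mod n)) n D)"
proof -
  let ?at = "\<lambda>p. vs ! ((p + q) mod n)"
  let ?U = "{i. i < n \<and> \<not> fC vs D i \<and> fC vs D (Suc i)}"
  define g where "g i = Suc ((i + n - q) mod n)" for i
  have st: "lin.starts ?at n D = {p. p < n \<and> ?at p \<in> D \<and> (p = 0 \<or> ?at (p - 1) \<notin> D)}"
    by (rule lin.starts_def[OF L[OF q]])
  have gi: "g ` ?U \<subseteq> lin.starts ?at n D"
  proof
    fix x assume "x \<in> g ` ?U"
    then obtain i where i: "i < n" "vs ! i \<notin> D" "vs ! (Suc i mod n) \<in> D" "x = g i"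
      unfolding fC_def by auto
    define p' where "p' = (i + n - q) mod n"
    have a1: "?at p' = vs ! i" unfolding p'_def using rot_inv[OF i(1) q] by simp
    have a2: "?at (Suc p') = vs ! (Suc i mod n)"
    proof -
      have "(Suc p' + q) mod n = Suc ((p' + q) mod n) mod n" by (simp add: mod_Suc_eq)
      then show ?thesis unfolding p'_def using rot_inv[OF i(1) q] by simp
    qed
    have pn: "p' < n" unfolding p'_def using np by simp
    have "Suc p' \<noteq> n"
    proof
      assume "Suc p' = n"
      then have "?at (Suc p') = vs ! q" using q by simp
      then show False using a2 i(3) Dq by simp
    qed
    then have "Suc p' < n" using pn by simp
    then show "x \<in> lin.starts ?at n D" unfolding st i(4) g_def p'_def[symmetric]
      using a1 a2 i by simp
  qed
  have inj: "inj_on g ?U"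
  proof
    fix i j assume i: "i \<in> ?U" and j: "j \<in> ?U" and e: "g i = g j"
    have "((i + n - q) mod n + q) mod n = ((j + n - q) mod n + q) mod n" using e unfolding g_def by simp
    then show "i = j" using rot_inv[of i n q] rot_inv[of j n q] i j q by simp
  qed
  have "ups (fC vs D) n = card ?U" unfolding ups_def ..
  also have "\<dots> \<le> card (lin.starts ?at n D)"
    by (rule card_inj_on_le[OF inj gi lin.finite_starts[OF L[OF q]]])
  finally show ?thesis .
qed

lemma starts_le_ups:
  assumes q: "q < n" and Dq: "vs ! q \<notin> D"
  shows "card (lin.starts (\<lambda>p. vs ! ((p + q) mod n)) n D) \<le> ups (fC vs D) n"
proof -
  let ?at = "\<lambda>p. vs ! ((p + q) mod n)"
  let ?U = "{i. i < n \<and> \<not> fC vs D i \<and> fC vs D (Suc i)}"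
  define h where "h p = (p - 1 + q) mod n" for p
  have st: "lin.starts ?at n D = {p. p < n \<and> ?at p \<in> D \<and> (p = 0 \<or> ?at (p - 1) \<notin> D)}"
    by (rule lin.starts_def[OF L[OF q]])
  have nz: "p \<noteq> 0" if "p \<in> lin.starts ?at n D" for p
    using that Dq q unfolding st by (cases "p = 0") auto
  have hi: "h ` lin.starts ?at n D \<subseteq> ?U"
  proof
    fix x assume "x \<in> h ` lin.starts ?at n D"
    then obtain p where p: "p \<in> lin.starts ?at n D" "x = h p" by auto
    have p0: "p \<noteq> 0" by (rule nz[OF p(1)])
    have pp: "p < n" "?at p \<in> D" "?at (p - 1) \<notin> D" using p(1) p0 unfolding st by auto
    have hn: "h p < n" unfolding h_def using np by simp
    have s: "Suc (h p) mod n = (p + q) mod n"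
    proof -
      have "Suc (h p) mod n = Suc (p - 1 + q) mod n" unfolding h_def by (simp add: mod_Suc_eq)
      also have "Suc (p - 1 + q) = p + q" using p0 by simp
      finally show ?thesis .
    qed
    show "x \<in> ?U" unfolding p(2) fC_def using hn s pp unfolding h_def by simp
  qed
  have inj: "inj_on h (lin.starts ?at n D)"
  proof
    fix a b assume a: "a \<in> lin.starts ?at n D" and b: "b \<in> lin.starts ?at n D" and e: "h a = h b"
    have a1: "a - 1 < n" "b - 1 < n" using a b unfolding st by auto
    have "?at (a - 1) = ?at (b - 1)" using e unfolding h_def by simp
    then have "a - 1 = b - 1" using lin.at_inj[OF L[OF q] a1] by blast
    then show "a = b" using nz[OF a] nz[OF b] by simp
  qed
  have "card (lin.starts ?at n D) \<le> card ?U"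
    by (rule card_inj_on_le[OF inj hi]) simp
  also have "\<dots> = ups (fC vs D) n" unfolding ups_def ..
  finally show ?thesis .
qed

lemma conn_chg:
  assumes DV: "D \<subseteq> set vs" and con: "induced_connected E D"
  shows "chg (fC vs D) n \<le> 2"
proof -
  have bal: "chg (fC vs D) n = 2 * ups (fC vs D) n"
    by (rule chg_balance) (simp add: fC_def)
  show ?thesis
  proof (cases "D = set vs")
    case True
    have e: "{i. i < n \<and> \<not> fC vs D i \<and> fC vs D (Suc i)} = {}"
      unfolding fC_def True using np by auto
    have "ups (fC vs D) n = 0" unfolding ups_def e by simp
    then show ?thesis using bal by simp
  next
    case False
    then obtain w where w: "w \<in> set vs" "w \<notin> D" using DV by blast
    then obtain q where q: "q < n" "vs ! q = w" unfolding in_set_conv_nth by blast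
    have "D \<subseteq> set vs - {vs ! q}" using DV w q by auto
    then have "card (lin.starts (\<lambda>p. vs ! ((p + q) mod n)) n D) \<le> 1"
      using lin.starts_le1[OF L[OF q(1)] _ con] by blast
    then show ?thesis using bal ups_le_starts[of q D] q w by simp
  qed
qed

lemma cc_V: "cc E (set vs) \<le> 1"
proof -
  let ?R = "adj_in E (set vs)"
  have r: "?R\<^sup>*\<^sup>* (vs ! 0) (vs ! i)" if "i < n" for i
    using that
  proof (induction i)
    case 0 then show ?case by simp
  next
    case (Suc i)
    have si: "Suc i mod n = Suc i" using Suc.prems by simp
    have "{vs ! i, vs ! (Suc i mod n)} \<in> E" unfolding E using Suc.prems by auto
    moreover have "vs ! i \<noteq> vs ! Suc i" using d Suc.prems nth_eq_iff_index_eq by fastforce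
    ultimately have "?R (vs ! i) (vs ! Suc i)" unfolding adj_in_def si using Suc.prems by simp
    then show ?case using Suc by (meson Suc_lessD rtranclp.rtrancl_into_rtrancl)
  qed
  have "compo E (set vs) ` set vs \<subseteq> {compo E (set vs) (vs ! 0)}"
  proof
    fix K assume "K \<in> compo E (set vs) ` set vs"
    then obtain i where i: "i < n" "K = compo E (set vs) (vs ! i)" by (auto simp: in_set_conv_nth)
    have "vs ! i \<in> compo E (set vs) (vs ! 0)" unfolding compo_def using r[OF i(1)] by simp
    then show "K \<in> {compo E (set vs) (vs ! 0)}" using cpo_eq i(2) by fast
  qed
  then have "card (compo E (set vs) ` set vs) \<le> card {compo E (set vs) (vs ! 0)}"
    by (rule card_mono[rotated]) simp
  then show ?thesis unfolding cc_comp by simp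
qed

lemma cycle_lower:
  assumes V: "V = set vs" and rs: "reconf_seq V E Is It seq"
  shows "cc E (symdiff Is It) \<le> length seq - 1"
proof -
  have ne: "seq \<noteq> []" using rs unfolding reconf_seq_def by simp
  have "chg (fC vs (symdiff Is (seq ! (length seq - 1)))) n \<le> 2 * (length seq - 1)"
    by (rule lower_generic[OF rs, of "fC vs"])
       (auto simp: fC_def symdiff_def conn_chg V ne)
  then have c: "chg (fC vs (symdiff Is It)) n \<le> 2 * (length seq - 1)"
    using reconf_last[OF rs] by simp
  have XV: "symdiff Is It \<subseteq> set vs" using rs V unfolding reconf_seq_def independent_def symdiff_def
    by (metis (no_types, lifting) Un_least Diff_subset ne hd_in_set last_in_set subset_trans)
  show ?thesis
  proof (cases "symdiff Is It = set vs")
    case True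
    have "length seq - 1 \<noteq> 0"
    proof
      assume "length seq - 1 = 0"
      then have "seq ! 0 = It" using reconf_last[OF rs] by simp
      moreover have "seq ! 0 = Is" using rs unfolding reconf_seq_def by (metis hd_conv_nth)
      ultimately have "symdiff Is It = {}" unfolding symdiff_def by auto
      then show False using True np by (cases vs) auto
    qed
    then show ?thesis using cc_V True by simp
  next
    case False
    then obtain w where w: "w \<in> set vs" "w \<notin> symdiff Is It" using XV by blast
    then obtain q where q: "q < n" "vs ! q = w" unfolding in_set_conv_nth by blast
    have "symdiff Is It \<subseteq> set vs - {vs ! q}" using XV w q by auto
    then have "cc E (symdiff Is It) \<le> card (lin.starts (\<lambda>p. vs ! ((p + q) mod n)) n (symdiff Is It))"
      using lin.cc_le_starts[OF L[OF q(1)]] by blast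
    also have "\<dots> \<le> ups (fC vs (symdiff Is It)) n" using starts_le_ups q w by simp
    also have "\<dots> \<le> length seq - 1"
      using c chg_balance[of "fC vs (symdiff Is It)" n] by (simp add: fC_def)
    finally show ?thesis .
  qed
qed

end

theorem theorem29:
  fixes V :: "'a set" and E :: "'a set set" and Is It :: "'a set"
  assumes "is_path_graph V E \<or> is_cycle_graph V E"
    and "independent V E Is" and "independent V E It"
  shows "(\<exists>seq. reconf_seq V E Is It seq \<and> length seq - 1 = cc E (symdiff Is It)) \<and>
         (\<forall>seq. reconf_seq V E Is It seq \<longrightarrow> cc E (symdiff Is It) \<le> length seq - 1)"
proof -
  obtain vs where V: "V = set vs" using assms(1) unfolding is_path_graph_def is_cycle_graph_def by blast
  have fin: "finite V" using V by simp
  have up: "\<exists>seq. reconf_seq V E Is It seq \<and> length seq - 1 = cc E (symdiff Is It)"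
    by (rule upper[OF assms(2,3) fin])
  have low: "cc E (symdiff Is It) \<le> length seq - 1" if rs: "reconf_seq V E Is It seq" for seq
    using assms(1)
  proof
    assume "is_path_graph V E"
    then obtain ws where ws: "distinct ws" "V = set ws" "E = {{ws ! i, ws ! Suc i} | i. Suc i < length ws}"
      unfolding is_path_graph_def by blast
    show ?thesis by (rule path_lower[OF ws(1,3,2) rs])
  next
    assume "is_cycle_graph V E"
    then obtain ws where ws: "length ws \<ge> 3" "distinct ws" "V = set ws"
        "E = {{ws ! i, ws ! ((Suc i) mod length ws)} | i. i < length ws}"
      unfolding is_cycle_graph_def by blast
    interpret cycg ws E by (rule cycg.intro[OF ws(2,1,4)])
    show ?thesis by (rule cycle_lower[OF ws(3) rs])
  qed
  show ?thesis using up low by blast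
qed

end
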